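(* Let $\mathcal T\in\Sigma^n$ be a text. Then \[\mathtt{st\text{-}pos}^-\subseteq\Big\{\,j\;:\;\text{either } j=1 \text{ or, for the minimum value } i'<j \text{ such that } \mathcal T[i',j-1] \text{ occurs in } \mathcal T[1,j-2],\ \mathcal T[i',j]\text{ does not occur in }\mathcal T[1,j-1]\Big\}.\]
   Context: A text is a string $\mathcal T\in\Sigma^n$ over an integer alphabet whose last symbol $\mathcal T[n]=\$$ occurs only there and is smallest. For $i\ne j$, $\mathrm{rlce}(i,j)$ is the length of the longest common prefix of $\mathcal T[i,n]$ and $\mathcal T[j,n]$. $\mathrm{LPF}[i]=0$ if $i=1$, else $\mathrm{LPF}[i]=\max_{j<i}\mathrm{rlce}(j,i)$ (the longest previous factor array). $\mathtt{st\text{-}pos}^-$ is the set $\{i+\mathrm{LPF}[i]: i\in[n]\}$ (sorted colexicographically by the prefixes $\mathcal T[1,j]$). *)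

theory Defs
  imports Main "HOL-Library.Sublist"
begin

text \<open>Texts are lists over an integer alphabet, indexed 1-based:
  position i (1 \<le> i \<le> n) of T is T ! (i - 1).  The last symbol occurs
  only at the last position and is the smallest symbol.\<close>

definition is_text :: "int list \<Rightarrow> bool" where
  "is_text T \<longleftrightarrow> T \<noteq> [] \<and> (\<forall>k < length T - 1. last T < T ! k)"

text \<open>Substring T[i,j] (1-based, inclusive); empty if j < i.\<close>
definition substr :: "int list \<Rightarrow> nat \<Rightarrow> nat \<Rightarrow> int list" where
  "substr T i j = drop (i - 1) (take j T)"

definition rlce :: "int list \<Rightarrow> nat \<Rightarrow> nat \<Rightarrow> nat" where
  "rlce T i j = length (longest_common_prefix (drop (i - 1) T) (drop (j - 1) T))"

definition LPF :: "int list \<Rightarrow> nat \<Rightarrow> nat" where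
  "LPF T i = (if i = 1 then 0 else Max {rlce T j i | j. 1 \<le> j \<and> j < i})"

definition st_pos_minus :: "int list \<Rightarrow> nat set" where
  "st_pos_minus T = {i + LPF T i | i. 1 \<le> i \<and> i \<le> length T}"

end

theory Submission
  imports Defs
begin

lemma sublist_idx:
  assumes "sublist xs ys"
  shows "\<exists>s. s + length xs \<le> length ys \<and> (\<forall>k<length xs. xs!k = ys!(s+k))"
proof -
  obtain a b where "ys = a @ xs @ b" using assms by (auto simp: sublist_def)
  then show ?thesis by (intro exI[of _ "length a"]) (auto simp: nth_append)
qed

lemma idx_sublist:
  assumes "s + length xs \<le> length ys" "\<forall>k<length xs. xs!k = ys!(s+k)"
  shows "sublist xs ys"
proof -
  have e: "xs = take (length xs) (drop s ys)"
    using assms by (intro nth_equalityI) auto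
  have "ys = take s ys @ take (length xs) (drop s ys) @ drop (length xs) (drop s ys)"
    by (metis append_take_drop_id)
  then show ?thesis unfolding sublist_def using e by metis
qed

lemma substr_len:
  assumes "1 \<le> a" "b \<le> length T"
  shows "length (substr T a b) = b + 1 - a"
  using assms by (simp add: substr_def)

lemma substr_nth:
  assumes "1 \<le> a" "b \<le> length T" "k < b + 1 - a"
  shows "substr T a b ! k = T ! (a - 1 + k)"
  using assms by (simp add: substr_def)

lemma rlce_ge:
  assumes "1 \<le> p" "1 \<le> i" "i - 1 + m \<le> length T" "p - 1 + m \<le> length T"
    "\<forall>k<m. T!(p-1+k) = T!(i-1+k)"
  shows "m \<le> rlce T p i"
proof -
  have e: "take m (drop (p-1) T) = take m (drop (i-1) T)"
    using assms by (intro nth_equalityI) auto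
  have "prefix (take m (drop (p-1) T)) (longest_common_prefix (drop (p - 1) T) (drop (i - 1) T))"
  proof (rule longest_common_prefix_max_prefix)
    show "prefix (take m (drop (p-1) T)) (drop (p-1) T)" by (rule take_is_prefix)
    have "prefix (take m (drop (i-1) T)) (drop (i-1) T)" by (rule take_is_prefix)
    then show "prefix (take m (drop (p-1) T)) (drop (i-1) T)" using e by simp
  qed
  then have "length (take m (drop (p-1) T)) \<le> rlce T p i"
    unfolding rlce_def by (rule prefix_length_le)
  then show ?thesis using assms by simp
qed

lemma rlce_eq:
  assumes "1 \<le> p" "1 \<le> i" "p \<le> length T" "i \<le> length T"
  shows "p - 1 + rlce T p i \<le> length T \<and> i - 1 + rlce T p i \<le> length T \<and>
    (\<forall>k<rlce T p i. T!(p-1+k) = T!(i-1+k))"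
proof -
  let ?l = "longest_common_prefix (drop (p - 1) T) (drop (i - 1) T)"
  have a: "prefix ?l (drop (p-1) T)" "prefix ?l (drop (i-1) T)"
    by (rule longest_common_prefix_prefix1, rule longest_common_prefix_prefix2)
  have "length ?l \<le> length (drop (p-1) T)" "length ?l \<le> length (drop (i-1) T)"
    using a prefix_length_le by blast+
  moreover have "\<forall>k<length ?l. T!(p-1+k) = T!(i-1+k)"
  proof (intro allI impI)
    fix k assume k: "k < length ?l"
    obtain z1 where z1: "drop (p-1) T = ?l @ z1" using a(1) prefix_def by blast
    obtain z2 where z2: "drop (i-1) T = ?l @ z2" using a(2) prefix_def by blast
    have "drop (p-1) T ! k = ?l ! k" using z1 k by (metis nth_append)
    moreover have "drop (i-1) T ! k = ?l ! k" using z2 k by (metis nth_append)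
    moreover have "p - 1 \<le> length T"
      using k \<open>length ?l \<le> length (drop (p-1) T)\<close> by (simp only: length_drop)
    moreover have "i - 1 \<le> length T"
      using k \<open>length ?l \<le> length (drop (i-1) T)\<close> by (simp only: length_drop)
    ultimately show "T!(p-1+k) = T!(i-1+k)" by (simp add: nth_drop)
  qed
  moreover have "p - 1 + length ?l \<le> length T"
    using \<open>length ?l \<le> length (drop (p-1) T)\<close> assms by simp
  moreover have "i - 1 + length ?l \<le> length T"
    using \<open>length ?l \<le> length (drop (i-1) T)\<close> assms by simp
  ultimately show ?thesis unfolding rlce_def by blast
qed

lemma rlce_le:
  assumes "is_text T" "1 \<le> p" "p < i" "i \<le> length T"
  shows "rlce T p i \<le> length T - i"
proof (rule ccontr)
  assume c: "\<not> ?thesis"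
  have r: "p - 1 + rlce T p i \<le> length T" "i - 1 + rlce T p i \<le> length T"
    "\<forall>k<rlce T p i. T!(p-1+k) = T!(i-1+k)" using rlce_eq[of p i T] assms by auto
  have "T!(p-1+(length T - i)) = T!(i-1+(length T - i))" using r(3) c by auto
  moreover have "i-1+(length T - i) = length T - 1" using assms by auto
  moreover have "p-1+(length T - i) < length T - 1" using assms by auto
  moreover have "last T = T ! (length T - 1)" using assms(1) by (simp add: is_text_def last_conv_nth)
  moreover have "last T < T!(p-1+(length T - i))" using assms(1) calculation(3) unfolding is_text_def by blast
  ultimately show False by (metis less_irrefl)
qed

lemma LPF_props:
  assumes "2 \<le> i"
  shows "(\<forall>p. 1 \<le> p \<and> p < i \<longrightarrow> rlce T p i \<le> LPF T i) \<and> (\<exists>p. 1 \<le> p \<and> p < i \<and> LPF T i = rlce T p i)"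
proof -
  let ?S = "{rlce T j i | j. 1 \<le> j \<and> j < i}"
  have S: "?S = (\<lambda>j. rlce T j i) ` {1..<i}" by auto
  have f: "finite ?S" unfolding S by simp
  have ne: "?S \<noteq> {}" using assms by auto
  have L: "LPF T i = Max ?S" using assms by (simp add: LPF_def)
  have "Max ?S \<in> ?S" using f ne by (rule Max_in)
  then obtain p where "1 \<le> p \<and> p < i \<and> Max ?S = rlce T p i" by blast
  moreover have "rlce T q i \<le> LPF T i" if "1 \<le> q \<and> q < i" for q
    unfolding L using that by (intro Max_ge[OF f]) blast
  ultimately show ?thesis using L by metis
qed

theorem corollary47:
  assumes "is_text T"
  shows "st_pos_minus T \<subseteq>
    {j. j = 1 \<or>
        ((\<exists>i'. 1 \<le> i' \<and> i' < j \<and> sublist (substr T i' (j - 1)) (substr T 1 (j - 2))) \<longrightarrow>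
         \<not> sublist (substr T (LEAST i'. 1 \<le> i' \<and> i' < j \<and> sublist (substr T i' (j - 1)) (substr T 1 (j - 2))) j)
                   (substr T 1 (j - 1)))}"
proof
  fix x assume "x \<in> st_pos_minus T"
  then obtain i where i: "1 \<le> i" "i \<le> length T" and x: "x = i + LPF T i"
    unfolding st_pos_minus_def by auto
  show "x \<in> {j. j = 1 \<or>
        ((\<exists>i'. 1 \<le> i' \<and> i' < j \<and> sublist (substr T i' (j - 1)) (substr T 1 (j - 2))) \<longrightarrow>
         \<not> sublist (substr T (LEAST i'. 1 \<le> i' \<and> i' < j \<and> sublist (substr T i' (j - 1)) (substr T 1 (j - 2))) j)
                   (substr T 1 (j - 1)))}"
  proof (cases "i = 1")
    case True then show ?thesis using x by (simp add: LPF_def)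
  next
    case False
    then have i2: "2 \<le> i" using i by auto
    define l where "l = LPF T i"
    define j where "j = i + l"
    have LP: "\<forall>p. 1 \<le> p \<and> p < i \<longrightarrow> rlce T p i \<le> l"
      "\<exists>p. 1 \<le> p \<and> p < i \<and> l = rlce T p i" using LPF_props[OF i2, of T] l_def by auto
    have jn: "j \<le> length T"
    proof -
      obtain p where "1 \<le> p" "p < i" "l = rlce T p i" using LP(2) by blast
      then have "l \<le> length T - i" using rlce_le[OF assms _ _ i(2)] by simp
      then show ?thesis using j_def i by simp
    qed
    define P where "P = (\<lambda>i'. 1 \<le> i' \<and> i' < j \<and> sublist (substr T i' (j - 1)) (substr T 1 (j - 2)))"
    have "\<not> sublist (substr T (LEAST i'. P i') j) (substr T 1 (j - 1))" if ex: "\<exists>i'. P i'"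
    proof
      define a where "a = (LEAST i'. P i')"
      have Pa: "P a" unfolding a_def using ex by (metis LeastI)
      have ai: "a \<le> i"
      proof (cases "l = 0")
        case True then show ?thesis using Pa j_def P_def by auto
      next
        case False
        obtain p where p: "1 \<le> p" "p < i" "l = rlce T p i" using LP(2) by auto
        have r: "\<forall>k<l. T!(p-1+k) = T!(i-1+k)" using rlce_eq[of p i T] p i by auto
        have "P i" unfolding P_def
        proof (intro conjI)
          show "1 \<le> i" "i < j" using i False j_def by auto
          show "sublist (substr T i (j - 1)) (substr T 1 (j - 2))"
          proof (rule idx_sublist[where s="p-1"])
            show "p - 1 + length (substr T i (j - 1)) \<le> length (substr T 1 (j - 2))"
              using substr_len[of i "j-1" T] substr_len[of 1 "j-2" T] i jn p j_def False by auto
            show "\<forall>k<length (substr T i (j - 1)). substr T i (j - 1) ! k = substr T 1 (j - 2) ! (p - 1 + k)"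
              using substr_len[of i "j-1" T] substr_nth[of i "j-1" T] substr_nth[of 1 "j-2" T] i jn p j_def False r
              by auto
          qed
        qed
        then show ?thesis unfolding a_def by (rule Least_le)
      qed
      assume sub: "sublist (substr T (LEAST i'. P i') j) (substr T 1 (j - 1))"
      then obtain s where s: "s + length (substr T a j) \<le> length (substr T 1 (j - 1))"
        "\<forall>k<length (substr T a j). substr T a j ! k = substr T 1 (j - 1) ! (s+k)"
        using sublist_idx a_def by metis
      have a1: "1 \<le> a" "a < j" using Pa P_def by auto
      have la: "length (substr T a j) = j + 1 - a" using substr_len a1 jn by auto
      have l1: "length (substr T 1 (j-1)) = j - 1" using substr_len[of 1 "j-1" T] jn by auto
      have s2: "s + 2 \<le> a" using s(1) la l1 a1 by auto
      have eq: "T!(s+k) = T!(a-1+k)" if kk: "k \<le> j - a" for k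
      proof -
        have k1: "k < length (substr T a j)" using la kk a1 by auto
        have k2: "s + k < j - 1" using s(1) la l1 kk a1 by auto
        have "substr T a j ! k = T!(a-1+k)" using substr_nth[of a j T k] k1 la a1 jn by auto
        moreover have "substr T 1 (j-1) ! (s+k) = T!(s+k)" using substr_nth[of 1 "j-1" T "s+k"] k2 jn by auto
        ultimately show ?thesis using s(2) k1 by metis
      qed
      define q where "q = s + (i - a) + 1"
      have "l + 1 \<le> rlce T q i"
      proof (rule rlce_ge)
        show "1 \<le> q" "1 \<le> i" using q_def i by auto
        show "i - 1 + (l + 1) \<le> length T" "q - 1 + (l + 1) \<le> length T"
          using jn j_def q_def s2 ai i by auto
        show "\<forall>k<l + 1. T ! (q - 1 + k) = T ! (i - 1 + k)"
        proof (intro allI impI)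
          fix k assume "k < l + 1"
          then have "(i - a) + k \<le> j - a" using j_def ai by auto
          then have "T!(s+((i-a)+k)) = T!(a-1+((i-a)+k))" by (rule eq)
          moreover have "a-1+((i-a)+k) = i - 1 + k" using ai a1 by auto
          moreover have "s+((i-a)+k) = q - 1 + k" using q_def by auto
          ultimately show "T ! (q - 1 + k) = T ! (i - 1 + k)" by metis
        qed
      qed
      moreover have "rlce T q i \<le> l" using LP(1) q_def s2 ai by auto
      ultimately show False by auto
    qed
    then show ?thesis using x unfolding j_def l_def P_def by auto
  qed
qed

end
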